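(* Let $(A,B)$ be a random vector with $\mathbb P\{A\in(0,1]\}=1$, $\mathbb P\{B>x\}\sim ax^ce^{-bx}$ as $x\to\infty$ for some $a,b>0$ and $c<-1$, $\mathbb E e^{bB}\mathbf 1_{\{A=1\}}<1$, and suppose there is a nonnegative measurable $f$ with $\mathbb P\{Ay+B>x\}\sim f(y)\mathbb P\{B>x\}$ as $x\to\infty$ for each $y\in\mathbb R$. Let $Y$ be a random variable independent of $(A,B)$ with $\mathbb P\{Y>x\}\sim c_Y\mathbb P\{B>x\}$ as $x\to\infty$ for some constant $c_Y>0$. Then $\mathbb E f(Y)<\infty$ and $$\mathbb P\{AY+B>x\}\sim\big(c_Y\,\mathbb E e^{bB}\mathbf 1_{\{A=1\}}+\mathbb E f(Y)\big)\mathbb P\{B>x\},\quad x\to\infty.$$ *)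

theory Defs
  imports "HOL-Probability.Probability" "HOL-Library.Landau_Symbols"
begin

end

theory Submission
  imports Defs "HOL-Real_Asymp.Real_Asymp"
begin

lemma (in prob_space) indep_fubini:
  fixes W :: "'a \<Rightarrow> 'b" and X :: "'a \<Rightarrow> 'b"
  assumes ind: "indep_var S X T W" and Q: "Q \<in> sets (S \<Otimes>\<^sub>M T)"
  shows "prob {\<omega>\<in>space M. (X \<omega>, W \<omega>) \<in> Q} = expectation (\<lambda>\<omega>. prob {\<omega>'\<in>space M. (X \<omega>, W \<omega>') \<in> Q})"
    and "prob {\<omega>\<in>space M. (X \<omega>, W \<omega>) \<in> Q} = expectation (\<lambda>\<omega>. prob {\<omega>'\<in>space M. (X \<omega>', W \<omega>) \<in> Q})"
    and "(\<lambda>\<omega>. prob {\<omega>'\<in>space M. (X \<omega>, W \<omega>') \<in> Q}) \<in> borel_measurable M"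
    and "(\<lambda>\<omega>. prob {\<omega>'\<in>space M. (X \<omega>', W \<omega>) \<in> Q}) \<in> borel_measurable M"
proof -
  have rvX[measurable]: "X \<in> measurable M S" using indep_var_rv1[OF ind] .
  have rvW[measurable]: "W \<in> measurable M T" using indep_var_rv2[OF ind] .
  define D1 where "D1 = distr M S X"
  define D2 where "D2 = distr M T W"
  interpret D1: prob_space D1 unfolding D1_def by (rule prob_space_distr) fact
  interpret D2: prob_space D2 unfolding D2_def by (rule prob_space_distr) fact
  interpret D: pair_prob_space D1 D2 ..
  have eq: "D1 \<Otimes>\<^sub>M D2 = distr M (S \<Otimes>\<^sub>M T) (\<lambda>x. (X x, W x))"
    using ind unfolding D1_def D2_def indep_var_distribution_eq by simp
  have sD: "sets (D1 \<Otimes>\<^sub>M D2) = sets (S \<Otimes>\<^sub>M T)"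
    unfolding D1_def D2_def by (intro sets_pair_measure_cong) simp_all
  have sS2: "sets (S \<Otimes>\<^sub>M D2) = sets (S \<Otimes>\<^sub>M T)"
    unfolding D2_def by (intro sets_pair_measure_cong) simp_all
  have s1B: "sets (D1 \<Otimes>\<^sub>M T) = sets (S \<Otimes>\<^sub>M T)"
    unfolding D1_def by (intro sets_pair_measure_cong) simp_all
  have indQ: "(indicator Q :: _ \<Rightarrow> real) \<in> borel_measurable (S \<Otimes>\<^sub>M T)"
    using Q by (rule borel_measurable_indicator)
  have indQ': "(indicator Q :: _ \<Rightarrow> real) \<in> borel_measurable (D1 \<Otimes>\<^sub>M D2)"
    unfolding measurable_cong_sets[OF sD refl] by (rule indQ)
  have indQS2: "(indicator Q :: _ \<Rightarrow> real) \<in> borel_measurable (S \<Otimes>\<^sub>M D2)"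
    unfolding measurable_cong_sets[OF sS2 refl] by (rule indQ)
  have Q': "Q \<in> sets (D1 \<Otimes>\<^sub>M D2)" using Q sD by simp
  have integ: "integrable (D1 \<Otimes>\<^sub>M D2) (indicator Q :: _ \<Rightarrow> real)"
    by (rule D.integrable_const_bound[where B=1]) (auto intro: indQ')
  have P: "prob {\<omega>\<in>space M. (X \<omega>, W \<omega>) \<in> Q} = measure (D1 \<Otimes>\<^sub>M D2) Q"
    unfolding eq using Q
    by (subst measure_distr) (auto intro!: arg_cong[where f=prob])
  also have "\<dots> = integral\<^sup>L (D1 \<Otimes>\<^sub>M D2) (indicator Q)"
    using Q' by (simp add: D.emeasure_finite)
  finally have P2: "prob {\<omega>\<in>space M. (X \<omega>, W \<omega>) \<in> Q} = integral\<^sup>L (D1 \<Otimes>\<^sub>M D2) (indicator Q)" .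
  define g where "g x = ((\<integral>y. indicator Q (x, y) \<partial>D2) :: real)" for x
  have gm: "g \<in> borel_measurable S"
    unfolding g_def by (rule D2.borel_measurable_lebesgue_integral) (simp add: split_beta' indQS2)
  have g_eq: "g x = prob {\<omega>'\<in>space M. (x, W \<omega>') \<in> Q}" if "x \<in> space S" for x
  proof -
    have mx[measurable]: "(\<lambda>\<omega>'. (x, W \<omega>')) \<in> measurable M (S \<Otimes>\<^sub>M T)"
      using that by measurable
    have set: "{\<omega>'\<in>space M. (x, W \<omega>') \<in> Q} \<in> events"
      using measurable_sets[OF mx Q] by (simp add: vimage_def Int_def conj_commute)
    have "g x = (\<integral>\<omega>'. indicator Q (x, W \<omega>') \<partial>M)"
      unfolding g_def D2_def
    proof (subst integral_distr)
      show "(\<lambda>y. indicator Q (x, y) :: real) \<in> borel_measurable T"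
        using that Q by measurable
    qed auto
    also have "\<dots> = (\<integral>\<omega>'. indicator {\<omega>'\<in>space M. (x, W \<omega>') \<in> Q} \<omega>' \<partial>M)"
      by (intro Bochner_Integration.integral_cong refl) (auto simp: indicator_def)
    also have "\<dots> = prob {\<omega>'\<in>space M. (x, W \<omega>') \<in> Q}"
      using set by simp
    finally show ?thesis .
  qed
  define k where "k y = ((\<integral>x. indicator Q (x, y) \<partial>D1) :: real)" for y
  have km: "k \<in> borel_measurable T"
  proof -
    have i1: "(indicator Q :: _ \<Rightarrow> real) \<in> borel_measurable (D1 \<Otimes>\<^sub>M T)"
      unfolding measurable_cong_sets[OF s1B refl] by (rule indQ)
    have "(\<lambda>p. (indicator Q :: _ \<Rightarrow> real) ((\<lambda>(y,x). (x,y)) p)) \<in> borel_measurable (T \<Otimes>\<^sub>M D1)"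
      by (rule measurable_compose[OF measurable_pair_swap' i1])
    then have "(\<lambda>(y, x). indicator Q (x, y) :: real) \<in> borel_measurable (T \<Otimes>\<^sub>M D1)"
      by (simp add: split_beta')
    from D1.borel_measurable_lebesgue_integral[OF this] show ?thesis
      unfolding k_def by simp
  qed
  have k_eq: "k y = prob {\<omega>'\<in>space M. (X \<omega>', y) \<in> Q}" if yT: "y \<in> space T" for y
  proof -
    have mx[measurable]: "(\<lambda>\<omega>'. (X \<omega>', y)) \<in> measurable M (S \<Otimes>\<^sub>M T)"
      using yT by measurable
    have set: "{\<omega>'\<in>space M. (X \<omega>', y) \<in> Q} \<in> events"
      using measurable_sets[OF mx Q] by (simp add: vimage_def Int_def conj_commute)
    have "k y = (\<integral>\<omega>'. indicator Q (X \<omega>', y) \<partial>M)"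
      unfolding k_def D1_def
    proof (subst integral_distr)
      show "(\<lambda>x. indicator Q (x, y) :: real) \<in> borel_measurable S"
        using yT Q by measurable
    qed auto
    also have "\<dots> = (\<integral>\<omega>'. indicator {\<omega>'\<in>space M. (X \<omega>', y) \<in> Q} \<omega>' \<partial>M)"
      by (intro Bochner_Integration.integral_cong refl) (auto simp: indicator_def)
    also have "\<dots> = prob {\<omega>'\<in>space M. (X \<omega>', y) \<in> Q}"
      using set by simp
    finally show ?thesis .
  qed
  have e1: "(\<lambda>\<omega>. prob {\<omega>'\<in>space M. (X \<omega>, W \<omega>') \<in> Q}) \<in> borel_measurable M"
    by (rule measurable_cong[THEN iffD1, of _ "\<lambda>\<omega>. g (X \<omega>)"])
       (auto simp: g_eq measurable_space[OF rvX] intro: measurable_compose[OF rvX gm])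
  show e2: "(\<lambda>\<omega>. prob {\<omega>'\<in>space M. (X \<omega>', W \<omega>) \<in> Q}) \<in> borel_measurable M"
    by (rule measurable_cong[THEN iffD1, of _ "\<lambda>\<omega>. k (W \<omega>)"])
       (auto simp: k_eq measurable_space[OF rvW] intro: measurable_compose[OF rvW km])
  show "(\<lambda>\<omega>. prob {\<omega>'\<in>space M. (X \<omega>, W \<omega>') \<in> Q}) \<in> borel_measurable M" by (rule e1)
  have "integral\<^sup>L (D1 \<Otimes>\<^sub>M D2) (indicator Q) = (\<integral>x. g x \<partial>D1)"
    unfolding g_def by (rule D.integral_fst'[OF integ, symmetric])
  also have "\<dots> = expectation (\<lambda>\<omega>. g (X \<omega>))"
    unfolding D1_def by (rule integral_distr[OF rvX gm])
  also have "\<dots> = expectation (\<lambda>\<omega>. prob {\<omega>'\<in>space M. (X \<omega>, W \<omega>') \<in> Q})"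
    by (intro Bochner_Integration.integral_cong refl) (auto simp: g_eq measurable_space[OF rvX])
  finally show "prob {\<omega>\<in>space M. (X \<omega>, W \<omega>) \<in> Q} = expectation (\<lambda>\<omega>. prob {\<omega>'\<in>space M. (X \<omega>, W \<omega>') \<in> Q})"
    using P2 by simp
  have "integral\<^sup>L (D1 \<Otimes>\<^sub>M D2) (indicator Q) = (\<integral>y. k y \<partial>D2)"
  proof -
    have integ2: "integrable (D1 \<Otimes>\<^sub>M D2) (\<lambda>(x,y). indicator Q (x,y) :: real)"
      using integ by (simp add: split_beta')
    show ?thesis
      unfolding k_def using D.Fubini_integral[OF integ2] D.integral_fst'[OF integ] by simp
  qed
  also have "\<dots> = expectation (\<lambda>\<omega>. k (W \<omega>))"
    unfolding D2_def by (rule integral_distr[OF rvW km])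
  finally show "prob {\<omega>\<in>space M. (X \<omega>, W \<omega>) \<in> Q} = expectation (\<lambda>\<omega>. prob {\<omega>'\<in>space M. (X \<omega>', W \<omega>) \<in> Q})"
    using P2 by (simp add: k_eq measurable_space[OF rvW] cong: Bochner_Integration.integral_cong)
qed


lemma equiv_ratio_tendsto:
  fixes F h :: "real \<Rightarrow> real"
  assumes "F \<sim>[at_top] h" "eventually (\<lambda>x. h x \<noteq> 0) at_top"
  shows "((\<lambda>x. F x / h x) \<longlongrightarrow> 1) at_top"
proof -
  have "((\<lambda>x. if F x = 0 \<and> h x = 0 then 1 else F x / h x) \<longlongrightarrow> 1) at_top"
    using asymp_equivD[OF assms(1)] .
  then show ?thesis
    by (rule tendsto_cong[THEN iffD1, rotated]) (use assms(2) in \<open>auto elim: eventually_mono\<close>)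
qed

locale tailF =
  fixes F :: "real \<Rightarrow> real" and a b c :: real
  assumes Fe: "F \<sim>[at_top] (\<lambda>x. a * x powr c * exp (- b * x))"
    and a_pos: "a > 0" and b_pos: "b > 0"
begin

definition "h x = a * x powr c * exp (- b * x)"

lemma h_pos: "x > 0 \<Longrightarrow> h x > 0"
  unfolding h_def using a_pos by simp

lemma h_ev_pos: "eventually (\<lambda>x. h x > 0) at_top"
  using eventually_gt_at_top[of 0] by eventually_elim (rule h_pos)

lemma rF: "((\<lambda>x. F x / h x) \<longlongrightarrow> 1) at_top"
  unfolding h_def
  by (rule equiv_ratio_tendsto[OF Fe]) (use h_ev_pos in \<open>auto simp: h_def elim: eventually_mono\<close>)

lemma rF': "((\<lambda>x. h x / F x) \<longlongrightarrow> 1) at_top"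
  using tendsto_inverse[OF rF] by (simp add: inverse_eq_divide)

lemma F_ev_pos: "eventually (\<lambda>x. F x > 0) at_top"
proof -
  have "eventually (\<lambda>x. F x / h x > 1/2) at_top"
    using rF by (rule order_tendstoD) simp
  with h_ev_pos show ?thesis
    by eventually_elim (auto simp: field_simps zero_less_divide_iff)
qed

lemma F_upper: "eventually (\<lambda>x. F x \<le> 2 * h x) at_top"
proof -
  have "eventually (\<lambda>x. F x / h x < 2) at_top"
    using rF by (rule order_tendstoD) simp
  with h_ev_pos show ?thesis
    by eventually_elim (auto simp: field_simps)
qed

lemma F_lower: "eventually (\<lambda>x. h x \<le> 2 * F x) at_top"
proof -
  have "eventually (\<lambda>x. F x / h x > 1/2) at_top"
    using rF by (rule order_tendstoD) simp
  with h_ev_pos show ?thesis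
    by eventually_elim (auto simp: field_simps)
qed

lemma rF_comp:
  assumes "filterlim g at_top at_top"
  shows "((\<lambda>x. F (g x) / h (g x)) \<longlongrightarrow> 1) at_top"
  using filterlim_compose[OF rF assms] by simp

lemma h_shift: "((\<lambda>x. h (x + s) / h x) \<longlongrightarrow> exp (- b * s)) at_top"
proof -
  have "((\<lambda>x. ((x + s) / x) powr c * exp (- b * s)) \<longlongrightarrow> exp (- b * s)) at_top"
    by real_asymp
  moreover have "eventually (\<lambda>x. ((x + s) / x) powr c * exp (- b * s) = h (x + s) / h x) at_top"
    using eventually_gt_at_top[of "max 0 (- s)"]
  proof eventually_elim
    case (elim x)
    then have "x > 0" "x + s > 0" by auto
    have e: "exp (- b * (x + s)) = exp (- b * s) * exp (- b * x)"
      by (simp add: exp_add[symmetric] algebra_simps)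
    show ?case using a_pos \<open>x > 0\<close> \<open>x + s > 0\<close>
      unfolding h_def e by (simp add: powr_divide)
  qed
  ultimately show ?thesis by (auto intro: tendsto_cong[THEN iffD1, rotated])
qed

lemma h_grow: "u > 1 \<Longrightarrow> ((\<lambda>x. h (u * x + s) / h x) \<longlongrightarrow> 0) at_top"
  unfolding h_def using a_pos b_pos by real_asymp

lemma F_ratio_gen:
  assumes g: "filterlim g at_top at_top" and hl: "((\<lambda>x. h (g x) / h x) \<longlongrightarrow> L) at_top"
  shows "((\<lambda>x. F (g x) / F x) \<longlongrightarrow> L) at_top"
proof -
  have "((\<lambda>x. (F (g x) / h (g x)) * (h x / F x) * (h (g x) / h x)) \<longlongrightarrow> 1 * 1 * L) at_top"
    by (intro tendsto_mult rF_comp g rF' hl)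
  moreover have "eventually (\<lambda>x. (F (g x) / h (g x)) * (h x / F x) * (h (g x) / h x) = F (g x) / F x) at_top"
    using h_ev_pos filterlim_iff[THEN iffD1, OF g, rule_format, OF h_ev_pos] F_ev_pos
    by eventually_elim (auto simp: field_simps)
  ultimately show ?thesis
    by (auto intro: tendsto_cong[THEN iffD1, rotated])
qed

lemma F_shift: "((\<lambda>x. F (x + s) / F x) \<longlongrightarrow> exp (- b * s)) at_top"
  by (rule F_ratio_gen[OF _ h_shift]) real_asymp

lemma F_grow: "u > 1 \<Longrightarrow> ((\<lambda>x. F (u * x + s) / F x) \<longlongrightarrow> 0) at_top"
  by (rule F_ratio_gen[OF _ h_grow]) (use a_pos in real_asymp)

end


lemma (in prob_space) exp_integrable:
  fixes X :: "'a \<Rightarrow> real"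
  assumes Xm[measurable]: "X \<in> borel_measurable M" and b: "b > 0" and c: "c < -1"
    and t0: "t0 \<ge> 1" and C: "C \<ge> 0"
    and tl: "\<And>t. t \<ge> t0 \<Longrightarrow> prob {\<omega>\<in>space M. X \<omega> > t} \<le> C * t powr c * exp (- b * t)"
  shows "integrable M (\<lambda>\<omega>. exp (b * X \<omega>))"
proof (rule integrableI_bounded)
  show "(\<lambda>\<omega>. exp (b * X \<omega>)) \<in> borel_measurable M" by measurable
  define S where "S n = {\<omega>\<in>space M. X \<omega> > t0 + real n}" for n
  have Sm[measurable]: "S n \<in> events" for n unfolding S_def by measurable
  define E where "E n = exp (b * (t0 + real n + 1))" for n
  have pw: "ennreal (norm (exp (b * X \<omega>))) \<le> ennreal (exp (b * t0)) + (\<Sum>n. ennreal (E n) * indicator (S n) \<omega>)"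
    if "\<omega> \<in> space M" for \<omega>
  proof (cases "X \<omega> \<le> t0")
    case True
    then have "exp (b * X \<omega>) \<le> exp (b * t0)" using b by simp
    then have "ennreal (norm (exp (b * X \<omega>))) \<le> ennreal (exp (b * t0))" by (simp add: ennreal_leI)
    also have "\<dots> \<le> ennreal (exp (b * t0)) + (\<Sum>n. ennreal (E n) * indicator (S n) \<omega>)"
      by (rule add_increasing2) auto
    finally show ?thesis .
  next
    case False
    define n where "n = nat (\<lceil>X \<omega> - t0\<rceil> - 1)"
    have cc: "of_int \<lceil>X \<omega> - t0\<rceil> - 1 < X \<omega> - t0" "X \<omega> - t0 \<le> of_int \<lceil>X \<omega> - t0\<rceil>"
      using ceiling_correct[of "X \<omega> - t0"] by auto
    have "\<lceil>X \<omega> - t0\<rceil> \<ge> 1" using False by (simp add: one_le_ceiling)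
    then have rn: "real n = of_int \<lceil>X \<omega> - t0\<rceil> - 1" unfolding n_def by simp
    have n1: "t0 + real n < X \<omega>" and n2: "X \<omega> \<le> t0 + real n + 1" using cc rn by linarith+
    have "\<omega> \<in> S n" using n1 that by (simp add: S_def)
    have "exp (b * X \<omega>) \<le> E n" unfolding E_def using n2 b by simp
    then have "ennreal (norm (exp (b * X \<omega>))) \<le> ennreal (E n) * indicator (S n) \<omega>"
      using \<open>\<omega> \<in> S n\<close> by (simp add: ennreal_leI)
    also have "\<dots> \<le> (\<Sum>n. ennreal (E n) * indicator (S n) \<omega>)"
    proof -
      have "(\<Sum>k\<in>{n}. ennreal (E k) * indicator (S k) \<omega>) \<le> (\<Sum>k. ennreal (E k) * indicator (S k) \<omega>)"
        by (rule sum_le_suminf[OF summableI]) auto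
      then show ?thesis
        by (simp only: sum.insert finite.emptyI empty_iff not_False_eq_True sum.empty add_0_right)
    qed
    also have "\<dots> \<le> ennreal (exp (b * t0)) + (\<Sum>n. ennreal (E n) * indicator (S n) \<omega>)"
      by (rule add_increasing) auto
    finally show ?thesis .
  qed
  have summ: "summable (\<lambda>n. C * exp b * real (Suc n) powr c)"
  proof -
    have "summable (\<lambda>n. real n powr c)" using summable_real_powr_iff c by simp
    then have "summable (\<lambda>n. real (Suc n) powr c)" by (subst summable_Suc_iff)
    then show ?thesis by (rule summable_mult)
  qed
  have trm: "ennreal (E n) * emeasure M (S n) \<le> ennreal (C * exp b * real (Suc n) powr c)" for n
  proof -
    have "t0 + real n \<ge> t0" by simp
    then have p: "prob (S n) \<le> C * (t0 + real n) powr c * exp (- b * (t0 + real n))"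
      unfolding S_def by (rule tl)
    have "E n * prob (S n) \<le> E n * (C * (t0 + real n) powr c * exp (- b * (t0 + real n)))"
      by (rule mult_left_mono[OF p]) (simp add: E_def)
    also have "\<dots> = C * exp b * (t0 + real n) powr c"
      unfolding E_def by (simp add: exp_add[symmetric] algebra_simps)
    also have "\<dots> \<le> C * exp b * real (Suc n) powr c"
      using t0 c C by (intro mult_left_mono powr_mono2') auto
    finally have "E n * prob (S n) \<le> C * exp b * real (Suc n) powr c" .
    then show ?thesis
      by (simp add: emeasure_eq_measure ennreal_mult[symmetric] E_def ennreal_leI)
  qed
  have "(\<integral>\<^sup>+\<omega>. ennreal (norm (exp (b * X \<omega>))) \<partial>M)
      \<le> (\<integral>\<^sup>+\<omega>. ennreal (exp (b * t0)) + (\<Sum>n. ennreal (E n) * indicator (S n) \<omega>) \<partial>M)"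
    by (rule nn_integral_mono) (rule pw)
  also have "\<dots> = ennreal (exp (b * t0)) + (\<Sum>n. ennreal (E n) * emeasure M (S n))"
    by (simp add: nn_integral_add nn_integral_suminf nn_integral_cmult_indicator emeasure_space_1)
  also have "\<dots> \<le> ennreal (exp (b * t0)) + (\<Sum>n. ennreal (C * exp b * real (Suc n) powr c))"
    by (intro add_left_mono suminf_le summableI trm)
  also have "\<dots> = ennreal (exp (b * t0)) + ennreal (\<Sum>n. C * exp b * real (Suc n) powr c)"
    using summ C by (subst suminf_ennreal2) auto
  also have "\<dots> < \<infinity>" by simp
  finally show "(\<integral>\<^sup>+\<omega>. ennreal (norm (exp (b * X \<omega>))) \<partial>M) < \<infinity>" .
qed


locale lem6 = prob_space M for M :: "'s measure" +
  fixes A B Y :: "'s \<Rightarrow> real" and f :: "real \<Rightarrow> real" and a b c cY :: real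
  assumes A_meas[measurable]: "A \<in> borel_measurable M"
    and B_meas[measurable]: "B \<in> borel_measurable M"
    and Y_meas[measurable]: "Y \<in> borel_measurable M"
    and A_range: "measure M {\<omega> \<in> space M. 0 < A \<omega> \<and> A \<omega> \<le> 1} = 1"
    and a_pos: "a > 0" and b_pos: "b > 0" and c_lt: "c < -1"
    and B_tail: "(\<lambda>x. measure M {\<omega> \<in> space M. B \<omega> > x}) \<sim>[at_top] (\<lambda>x. a * x powr c * exp (- b * x))"
    and f_meas[measurable]: "f \<in> borel_measurable borel"
    and f_nonneg: "\<And>y. f y \<ge> 0"
    and f_lim: "\<And>y. ((\<lambda>x. measure M {\<omega> \<in> space M. A \<omega> * y + B \<omega> > x}
                          / measure M {\<omega> \<in> space M. B \<omega> > x}) \<longlongrightarrow> f y) at_top"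
    and indep: "indep_set
        {(\<lambda>\<omega>. (A \<omega>, B \<omega>)) -` S \<inter> space M | S. S \<in> sets (borel \<Otimes>\<^sub>M borel)}
        {Y -` S \<inter> space M | S. S \<in> sets borel}"
    and cY_pos: "cY > 0"
    and Y_tail: "((\<lambda>x. measure M {\<omega> \<in> space M. Y \<omega> > x}
                     / measure M {\<omega> \<in> space M. B \<omega> > x}) \<longlongrightarrow> cY) at_top"
begin

definition F where "F x = prob {\<omega>\<in>space M. B \<omega> > x}"
definition G where "G x = prob {\<omega>\<in>space M. Y \<omega> > x}"

lemma tF_loc: "tailF F a b c"
  by unfold_locales (use B_tail a_pos b_pos in \<open>simp_all add: F_def[abs_def]\<close>)

sublocale tF: tailF F a b c by (rule tF_loc)

lemma AEA: "AE \<omega> in M. 0 < A \<omega> \<and> A \<omega> \<le> 1"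
proof -
  have S: "{\<omega> \<in> space M. 0 < A \<omega> \<and> A \<omega> \<le> 1} \<in> events" by measurable
  have "AE \<omega> in M. \<omega> \<in> {\<omega> \<in> space M. 0 < A \<omega> \<and> A \<omega> \<le> 1}"
    using AE_in_set_eq_1[OF S] A_range by simp
  then show ?thesis by eventually_elim auto
qed

lemma ind: "indep_var (borel \<Otimes>\<^sub>M borel) (\<lambda>\<omega>. (A \<omega>, B \<omega>)) (borel \<Otimes>\<^sub>M borel) (\<lambda>\<omega>. (Y \<omega>, 0::real))"
  unfolding indep_var_def indep_vars_def2
proof (intro conjI ballI)
  fix i :: bool
  show "random_variable (case_bool (borel \<Otimes>\<^sub>M borel) (borel \<Otimes>\<^sub>M borel) i)
          (case_bool (\<lambda>\<omega>. (A \<omega>, B \<omega>)) (\<lambda>\<omega>. (Y \<omega>, 0::real)) i)"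
    by (cases i) simp_all
next
  show "indep_sets (\<lambda>i. {case_bool (\<lambda>\<omega>. (A \<omega>, B \<omega>)) (\<lambda>\<omega>. (Y \<omega>, 0::real)) i -` S \<inter> space M |S.
        S \<in> sets (case_bool (borel \<Otimes>\<^sub>M borel) (borel \<Otimes>\<^sub>M borel) i)}) UNIV"
  proof (rule indep_sets_mono_sets[OF indep[unfolded indep_set_def]])
    fix i :: bool
    show "{case_bool (\<lambda>\<omega>. (A \<omega>, B \<omega>)) (\<lambda>\<omega>. (Y \<omega>, 0::real)) i -` S \<inter> space M |S.
        S \<in> sets (case_bool (borel \<Otimes>\<^sub>M borel) (borel \<Otimes>\<^sub>M borel) i)}
      \<subseteq> case_bool {(\<lambda>\<omega>. (A \<omega>, B \<omega>)) -` S \<inter> space M | S. S \<in> sets (borel \<Otimes>\<^sub>M borel)}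
        {Y -` S \<inter> space M | S. S \<in> sets borel} i"
    proof (cases i)
      case True then show ?thesis by auto
    next
      case False
      have "\<exists>S'. W -` S \<inter> space M = Y -` S' \<inter> space M \<and> S' \<in> sets borel"
        if "S \<in> sets (borel \<Otimes>\<^sub>M borel)" "W = (\<lambda>\<omega>. (Y \<omega>, 0::real))" for S W
      proof (intro exI conjI)
        have m: "(\<lambda>y::real. (y, 0::real)) \<in> measurable borel (borel \<Otimes>\<^sub>M borel)" by measurable
        show "(\<lambda>y::real. (y, 0::real)) -` S \<in> sets borel"
          using measurable_sets[OF m that(1)] by simp
        show "W -` S \<inter> space M = Y -` ((\<lambda>y::real. (y, 0::real)) -` S) \<inter> space M"
          using that(2) by auto
      qed
      with False show ?thesis by auto
    qed
  qed
qed

lemma fub: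
  fixes P :: "real \<Rightarrow> real \<Rightarrow> real \<Rightarrow> bool"
  assumes Pm: "Measurable.pred ((borel \<Otimes>\<^sub>M borel) \<Otimes>\<^sub>M (borel \<Otimes>\<^sub>M borel))
      (\<lambda>p::(real \<times> real) \<times> (real \<times> real). P (fst (fst p)) (snd (fst p)) (fst (snd p)))"
  shows "prob {\<omega>\<in>space M. P (A \<omega>) (B \<omega>) (Y \<omega>)} = expectation (\<lambda>\<omega>. prob {\<omega>'\<in>space M. P (A \<omega>) (B \<omega>) (Y \<omega>')})"
    and "prob {\<omega>\<in>space M. P (A \<omega>) (B \<omega>) (Y \<omega>)} = expectation (\<lambda>\<omega>. prob {\<omega>'\<in>space M. P (A \<omega>') (B \<omega>') (Y \<omega>)})"
    and "(\<lambda>\<omega>. prob {\<omega>'\<in>space M. P (A \<omega>) (B \<omega>) (Y \<omega>')}) \<in> borel_measurable M"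
    and "(\<lambda>\<omega>. prob {\<omega>'\<in>space M. P (A \<omega>') (B \<omega>') (Y \<omega>)}) \<in> borel_measurable M"
proof -
  define Q where "Q = {p \<in> space ((borel \<Otimes>\<^sub>M borel) \<Otimes>\<^sub>M (borel \<Otimes>\<^sub>M borel)).
      P (fst (fst p)) (snd (fst p)) (fst (snd p :: real \<times> real))}"
  have Q: "Q \<in> sets ((borel \<Otimes>\<^sub>M borel) \<Otimes>\<^sub>M (borel \<Otimes>\<^sub>M borel))"
    using Pm unfolding Q_def pred_def .
  note fb = indep_fubini[OF ind Q]
  show "prob {\<omega>\<in>space M. P (A \<omega>) (B \<omega>) (Y \<omega>)} = expectation (\<lambda>\<omega>. prob {\<omega>'\<in>space M. P (A \<omega>) (B \<omega>) (Y \<omega>')})"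
    using fb(1) by (simp add: Q_def space_pair_measure)
  show "prob {\<omega>\<in>space M. P (A \<omega>) (B \<omega>) (Y \<omega>)} = expectation (\<lambda>\<omega>. prob {\<omega>'\<in>space M. P (A \<omega>') (B \<omega>') (Y \<omega>)})"
    using fb(2) by (simp add: Q_def space_pair_measure)
  show "(\<lambda>\<omega>. prob {\<omega>'\<in>space M. P (A \<omega>) (B \<omega>) (Y \<omega>')}) \<in> borel_measurable M"
    using fb(3) by (simp add: Q_def space_pair_measure)
  show "(\<lambda>\<omega>. prob {\<omega>'\<in>space M. P (A \<omega>') (B \<omega>') (Y \<omega>)}) \<in> borel_measurable M"
    using fb(4) by (simp add: Q_def space_pair_measure)
qed

lemma prob_mono_AE':
  assumes "AE \<omega> in M. P \<omega> \<longrightarrow> Q \<omega>" "{\<omega>\<in>space M. Q \<omega>} \<in> events"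
  shows "prob {\<omega>\<in>space M. P \<omega>} \<le> prob {\<omega>\<in>space M. Q \<omega>}"
  by (rule finite_measure_mono_AE[OF _ assms(2)]) (use assms(1) in \<open>auto elim: AE_mp intro!: AE_I2\<close>)

lemma GF: "((\<lambda>x. G x / F x) \<longlongrightarrow> cY) at_top"
  using Y_tail unfolding F_def G_def .

lemma GF_comp: assumes g: "filterlim g at_top at_top" shows "((\<lambda>x. G (g x) / F (g x)) \<longlongrightarrow> cY) at_top"
  using filterlim_compose[OF GF g] by simp

lemma G_ratio_gen:
  assumes g: "filterlim g at_top at_top" and l: "((\<lambda>x. F (g x) / F x) \<longlongrightarrow> L) at_top"
  shows "((\<lambda>x. G (g x) / F x) \<longlongrightarrow> cY * L) at_top"
proof -
  have "((\<lambda>x. (G (g x) / F (g x)) * (F (g x) / F x)) \<longlongrightarrow> cY * L) at_top"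
    by (intro tendsto_mult GF_comp g l)
  moreover have "eventually (\<lambda>x. (G (g x) / F (g x)) * (F (g x) / F x) = G (g x) / F x) at_top"
    using filterlim_iff[THEN iffD1, OF g, rule_format, OF tF.F_ev_pos]
    by eventually_elim auto
  ultimately show ?thesis by (auto intro: tendsto_cong[THEN iffD1, rotated])
qed

lemma G_shift: "((\<lambda>x. G (x + s) / F x) \<longlongrightarrow> cY * exp (- b * s)) at_top"
  by (rule G_ratio_gen[OF _ tF.F_shift]) real_asymp

lemma G_grow:
  assumes u: "u > 1" shows "((\<lambda>x. G (u * x + s) / F x) \<longlongrightarrow> 0) at_top"
proof -
  have g: "filterlim (\<lambda>x. u * x + s) at_top at_top" using u by real_asymp
  from G_ratio_gen[OF g tF.F_grow[OF u]] show ?thesis by simp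
qed

lemma Ay_le: fixes a' y :: real shows "0 < a' \<Longrightarrow> a' \<le> 1 \<Longrightarrow> a' * y \<le> max y 0"
  by (cases "y \<ge> 0") (auto simp: mult_left_le_one_le mult_pos_neg max_def less_imp_le)

lemma F_nonneg: "F x \<ge> 0" unfolding F_def by simp
lemma G_nonneg: "G x \<ge> 0" unfolding G_def by simp

lemma tail_bounds_ex: "\<exists>t0\<ge>1. \<forall>t\<ge>t0. F t \<le> 2 * (a * t powr c * exp (- b * t)) \<and> G t \<le> 2 * (cY + 1) * (a * t powr c * exp (- b * t))"
proof -
  have e1: "eventually (\<lambda>t. G t / F t < cY + 1) at_top"
    using GF by (rule order_tendstoD) simp
  have "eventually (\<lambda>t. F t \<le> 2 * (a * t powr c * exp (- b * t)) \<and> G t \<le> 2 * (cY + 1) * (a * t powr c * exp (- b * t))) at_top"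
    using tF.F_upper[unfolded tF.h_def] e1 tF.F_ev_pos tF.h_ev_pos[unfolded tF.h_def]
  proof eventually_elim
    case (elim t)
    then have "G t \<le> (cY + 1) * F t" by (simp add: pos_divide_less_eq less_imp_le)
    also have "\<dots> \<le> (cY + 1) * (2 * (a * t powr c * exp (- b * t)))" using elim cY_pos by (intro mult_left_mono) auto
    also have "\<dots> = 2 * (cY + 1) * (a * t powr c * exp (- b * t))" by (simp add: mult_ac)
    finally show ?case using elim by simp
  qed
  then obtain N where "\<forall>t\<ge>N. F t \<le> 2 * (a * t powr c * exp (- b * t)) \<and> G t \<le> 2 * (cY + 1) * (a * t powr c * exp (- b * t))"
    by (auto simp: eventually_at_top_linorder)
  then show ?thesis by (intro exI[of _ "max N 1"]) auto
qed

definition t0 :: real where "t0 = (SOME t0. t0 \<ge> 1 \<and> (\<forall>t\<ge>t0. F t \<le> 2 * (a * t powr c * exp (- b * t)) \<and> G t \<le> 2 * (cY + 1) * (a * t powr c * exp (- b * t))))"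

lemma t0: "t0 \<ge> 1" "\<And>t. t \<ge> t0 \<Longrightarrow> F t \<le> 2 * (a * t powr c * exp (- b * t))" "\<And>t. t \<ge> t0 \<Longrightarrow> G t \<le> 2 * (cY + 1) * (a * t powr c * exp (- b * t))"
  using someI_ex[OF tail_bounds_ex] unfolding t0_def[symmetric] by auto

lemma int_expB: "integrable M (\<lambda>\<omega>. exp (b * B \<omega>))"
proof (rule exp_integrable[OF B_meas b_pos c_lt t0(1), of "2 * a"])
  show "0 \<le> 2 * a" using a_pos by simp
  fix t assume "t \<ge> t0"
  from t0(2)[OF this] show "prob {\<omega> \<in> space M. t < B \<omega>} \<le> 2 * a * t powr c * exp (- b * t)"
    unfolding F_def by (simp add: mult.assoc)
qed

lemma int_expY: "integrable M (\<lambda>\<omega>. exp (b * Y \<omega>))"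
proof (rule exp_integrable[OF Y_meas b_pos c_lt t0(1), of "2 * (cY + 1) * a"])
  show "0 \<le> 2 * (cY + 1) * a" using a_pos cY_pos by simp
  fix t assume "t \<ge> t0"
  from t0(3)[OF this] show "prob {\<omega> \<in> space M. t < Y \<omega>} \<le> 2 * (cY + 1) * a * t powr c * exp (- b * t)"
    unfolding G_def by (simp add: mult.assoc)
qed

lemma f_bound: "f y \<le> exp (b * max y 0)"
proof -
  define m where "m = max y 0"
  have l1: "((\<lambda>x. prob {\<omega> \<in> space M. A \<omega> * y + B \<omega> > x} / F x) \<longlongrightarrow> f y) at_top"
    using f_lim[of y] unfolding F_def .
  have l2: "((\<lambda>x. F (x + - m) / F x) \<longlongrightarrow> exp (- b * - m)) at_top"
    by (rule tF.F_shift)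
  have "eventually (\<lambda>x. prob {\<omega> \<in> space M. A \<omega> * y + B \<omega> > x} / F x \<le> F (x + - m) / F x) at_top"
    using tF.F_ev_pos
  proof eventually_elim
    case (elim x)
    have "prob {\<omega> \<in> space M. A \<omega> * y + B \<omega> > x} \<le> prob {\<omega> \<in> space M. B \<omega> > x + - m}"
    proof (rule prob_mono_AE')
      show "AE \<omega> in M. x < A \<omega> * y + B \<omega> \<longrightarrow> x + - m < B \<omega>"
        using AEA
      proof eventually_elim
        case (elim \<omega>)
        then have "A \<omega> * y \<le> m" unfolding m_def by (intro Ay_le) auto
        then show ?case by linarith
      qed
    qed measurable
    then show ?case unfolding F_def using elim by (intro divide_right_mono) (auto simp: F_def)
  qed
  from tendsto_le[OF _ l2 l1 this] show ?thesis unfolding m_def by simp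
qed

lemma int_fY: "integrable M (\<lambda>\<omega>. f (Y \<omega>))"
proof (rule Bochner_Integration.integrable_bound[OF Bochner_Integration.integrable_add[OF int_expY integrable_const]])
  show "(\<lambda>\<omega>. f (Y \<omega>)) \<in> borel_measurable M" by measurable
  show "AE \<omega> in M. norm (f (Y \<omega>)) \<le> norm (exp (b * Y \<omega>) + 1)"
  proof (rule AE_I2)
    fix \<omega>
    have "f (Y \<omega>) \<le> exp (b * max (Y \<omega>) 0)" by (rule f_bound)
    also have "\<dots> \<le> exp (b * Y \<omega>) + 1" by (cases "Y \<omega> \<ge> 0") (auto simp: max_def)
    finally show "norm (f (Y \<omega>)) \<le> norm (exp (b * Y \<omega>) + 1)" using f_nonneg[of "Y \<omega>"] by simp
  qed
qed


lemma X1: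
  assumes K: "K \<ge> 0"
  shows "((\<lambda>x. prob {\<omega>\<in>space M. A \<omega> * Y \<omega> + B \<omega> > x \<and> Y \<omega> \<le> K} / F x)
          \<longlongrightarrow> expectation (\<lambda>\<omega>. f (Y \<omega>) * indicator {\<omega>\<in>space M. Y \<omega> \<le> K} \<omega>)) at_top"
proof -
  have Pm: "Measurable.pred ((borel \<Otimes>\<^sub>M borel) \<Otimes>\<^sub>M (borel \<Otimes>\<^sub>M borel))
      (\<lambda>p::(real \<times> real) \<times> (real \<times> real). fst (fst p) * fst (snd p) + snd (fst p) > x \<and> fst (snd p) \<le> K)" for x
    by measurable
  have fb2: "prob {\<omega>\<in>space M. A \<omega> * Y \<omega> + B \<omega> > x \<and> Y \<omega> \<le> K}
      = expectation (\<lambda>\<omega>. prob {\<omega>'\<in>space M. A \<omega>' * Y \<omega> + B \<omega>' > x \<and> Y \<omega> \<le> K})" for x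
    using fub(2)[of "\<lambda>a' b' y. a' * y + b' > x \<and> y \<le> K", OF Pm] by simp
  have fb4: "(\<lambda>\<omega>. prob {\<omega>'\<in>space M. A \<omega>' * Y \<omega> + B \<omega>' > x \<and> Y \<omega> \<le> K}) \<in> borel_measurable M" for x
    using fub(4)[of "\<lambda>a' b' y. a' * y + b' > x \<and> y \<le> K", OF Pm] by simp
  define s where "s x \<omega> = prob {\<omega>'\<in>space M. A \<omega>' * Y \<omega> + B \<omega>' > x \<and> Y \<omega> \<le> K} / F x" for x \<omega>
  have eq: "prob {\<omega>\<in>space M. A \<omega> * Y \<omega> + B \<omega> > x \<and> Y \<omega> \<le> K} / F x = integral\<^sup>L M (s x)" for x
    unfolding s_def integral_divide_zero using fb2[of x] by simp
  have "((\<lambda>x. integral\<^sup>L M (s x)) \<longlongrightarrow> expectation (\<lambda>\<omega>. f (Y \<omega>) * indicator {\<omega>\<in>space M. Y \<omega> \<le> K} \<omega>)) at_top"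
  proof (rule integral_dominated_convergence_at_top[where w="\<lambda>_. exp (b * K) + 1"])
    show "(\<lambda>\<omega>. f (Y \<omega>) * indicator {\<omega>\<in>space M. Y \<omega> \<le> K} \<omega>) \<in> borel_measurable M" by measurable
    show "s t \<in> borel_measurable M" for t
      unfolding s_def using fb4[of t] by (intro borel_measurable_divide) auto
    show "integrable M (\<lambda>_. exp (b * K) + 1)" by simp
    show "AE \<omega> in M. ((\<lambda>i. s i \<omega>) \<longlongrightarrow> f (Y \<omega>) * indicator {\<omega>\<in>space M. Y \<omega> \<le> K} \<omega>) at_top"
    proof (rule AE_I2)
      fix \<omega> assume \<omega>: "\<omega> \<in> space M"
      show "((\<lambda>i. s i \<omega>) \<longlongrightarrow> f (Y \<omega>) * indicator {\<omega>\<in>space M. Y \<omega> \<le> K} \<omega>) at_top"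
      proof (cases "Y \<omega> \<le> K")
        case True
        then have "s i \<omega> = prob {\<omega>'\<in>space M. A \<omega>' * Y \<omega> + B \<omega>' > i} / F i" for i
          unfolding s_def by simp
        then show ?thesis using f_lim[of "Y \<omega>"] True \<omega> unfolding F_def by simp
      next
        case False
        then have "s i \<omega> = 0" for i unfolding s_def by simp
        then show ?thesis using False by simp
      qed
    qed
    show "\<forall>\<^sub>F i in at_top. AE \<omega> in M. norm (s i \<omega>) \<le> exp (b * K) + 1"
    proof -
      have "eventually (\<lambda>x. F (x + - K) / F x < exp (- b * - K) + 1) at_top"
        using tF.F_shift by (rule order_tendstoD) simp
      then show ?thesis using tF.F_ev_pos
      proof eventually_elim
        case (elim x)
        show ?case
        proof (rule AE_I2)
          fix \<omega> assume \<omega>: "\<omega> \<in> space M"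
          have "prob {\<omega>'\<in>space M. A \<omega>' * Y \<omega> + B \<omega>' > x \<and> Y \<omega> \<le> K} \<le> F (x + - K)"
            unfolding F_def
          proof (rule prob_mono_AE')
            show "AE \<omega>' in M. x < A \<omega>' * Y \<omega> + B \<omega>' \<and> Y \<omega> \<le> K \<longrightarrow> x + - K < B \<omega>'"
              using AEA
            proof eventually_elim
              case (elim \<omega>')
              then have "A \<omega>' * Y \<omega> \<le> max (Y \<omega>) 0" by (intro Ay_le) auto
              then show ?case using K by auto
            qed
          qed measurable
          then have "s x \<omega> \<le> F (x + - K) / F x"
            unfolding s_def using elim by (intro divide_right_mono) auto
          moreover have "s x \<omega> \<ge> 0" unfolding s_def using F_nonneg by simp
          ultimately show "norm (s x \<omega>) \<le> exp (b * K) + 1" using elim by simp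
        qed
      qed
    qed
  qed
  then show ?thesis unfolding eq .
qed


lemma X2:
  assumes K: "K \<ge> 0"
  shows "((\<lambda>x. prob {\<omega>\<in>space M. A \<omega> * Y \<omega> + B \<omega> > x \<and> Y \<omega> > K \<and> B \<omega> \<le> K} / F x)
          \<longlongrightarrow> cY * expectation (\<lambda>\<omega>. exp (b * B \<omega>) * indicator {\<omega>. A \<omega> = 1} \<omega> * indicator {\<omega>\<in>space M. B \<omega> \<le> K} \<omega>)) at_top"
proof -
  have Pm: "Measurable.pred ((borel \<Otimes>\<^sub>M borel) \<Otimes>\<^sub>M (borel \<Otimes>\<^sub>M borel))
      (\<lambda>p::(real \<times> real) \<times> (real \<times> real). fst (fst p) * fst (snd p) + snd (fst p) > x \<and> fst (snd p) > K \<and> snd (fst p) \<le> K)" for x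
    by measurable
  have fb1: "prob {\<omega>\<in>space M. A \<omega> * Y \<omega> + B \<omega> > x \<and> Y \<omega> > K \<and> B \<omega> \<le> K}
      = expectation (\<lambda>\<omega>. prob {\<omega>'\<in>space M. A \<omega> * Y \<omega>' + B \<omega> > x \<and> Y \<omega>' > K \<and> B \<omega> \<le> K})" for x
    using fub(1)[of "\<lambda>a' b' y. a' * y + b' > x \<and> y > K \<and> b' \<le> K", OF Pm] by simp
  have fb3: "(\<lambda>\<omega>. prob {\<omega>'\<in>space M. A \<omega> * Y \<omega>' + B \<omega> > x \<and> Y \<omega>' > K \<and> B \<omega> \<le> K}) \<in> borel_measurable M" for x
    using fub(3)[of "\<lambda>a' b' y. a' * y + b' > x \<and> y > K \<and> b' \<le> K", OF Pm] by simp
  define s where "s x \<omega> = prob {\<omega>'\<in>space M. A \<omega> * Y \<omega>' + B \<omega> > x \<and> Y \<omega>' > K \<and> B \<omega> \<le> K} / F x" for x \<omega>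
  define g where "g \<omega> = cY * (exp (b * B \<omega>) * indicator {\<omega>. A \<omega> = 1} \<omega> * indicator {\<omega>\<in>space M. B \<omega> \<le> K} \<omega>)" for \<omega>
  have eq: "prob {\<omega>\<in>space M. A \<omega> * Y \<omega> + B \<omega> > x \<and> Y \<omega> > K \<and> B \<omega> \<le> K} / F x = integral\<^sup>L M (s x)" for x
    unfolding s_def integral_divide_zero using fb1[of x] by simp
  have "((\<lambda>x. integral\<^sup>L M (s x)) \<longlongrightarrow> integral\<^sup>L M g) at_top"
  proof (rule integral_dominated_convergence_at_top[where w="\<lambda>_. cY * exp (b * K) + 1"])
    show "g \<in> borel_measurable M" unfolding g_def by measurable
    show "s t \<in> borel_measurable M" for t
      unfolding s_def using fb3[of t] by (intro borel_measurable_divide) auto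
    show "integrable M (\<lambda>_. cY * exp (b * K) + 1)" by simp
    show "AE \<omega> in M. ((\<lambda>i. s i \<omega>) \<longlongrightarrow> g \<omega>) at_top"
      using AEA AE_space
    proof eventually_elim
      case (elim \<omega>)
      note A0 = elim(1)
      show ?case
      proof (cases "B \<omega> \<le> K")
        case False
        then have "s i \<omega> = 0" for i unfolding s_def by simp
        moreover have "g \<omega> = 0" unfolding g_def using False elim by simp
        ultimately show ?thesis by simp
      next
        case True
        have ev: "eventually (\<lambda>i. s i \<omega> = G ((i - B \<omega>) / A \<omega>) / F i) at_top"
          using eventually_ge_at_top[of "2 * K"]
        proof eventually_elim
          case (elim i)
          have "{\<omega>'\<in>space M. A \<omega> * Y \<omega>' + B \<omega> > i \<and> Y \<omega>' > K \<and> B \<omega> \<le> K}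
              = {\<omega>'\<in>space M. Y \<omega>' > (i - B \<omega>) / A \<omega>}"
          proof (intro Collect_cong conj_cong refl iffI)
            fix \<omega>' assume "A \<omega> * Y \<omega>' + B \<omega> > i \<and> Y \<omega>' > K \<and> B \<omega> \<le> K"
            then have "i - B \<omega> < Y \<omega>' * A \<omega>" by (simp add: algebra_simps)
            then show "Y \<omega>' > (i - B \<omega>) / A \<omega>" using A0 by (simp add: pos_divide_less_eq)
          next
            fix \<omega>' assume y: "Y \<omega>' > (i - B \<omega>) / A \<omega>"
            then have "i - B \<omega> < Y \<omega>' * A \<omega>" using A0 by (simp add: pos_divide_less_eq)
            moreover have "(i - B \<omega>) / A \<omega> \<ge> i - B \<omega>"
            proof -
              have "i - B \<omega> \<ge> 0" using True elim K by simp
              then have "(i - B \<omega>) * A \<omega> \<le> i - B \<omega>" using A0 by (simp add: mult_left_le)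
              then show ?thesis using A0 by (simp add: le_divide_eq)
            qed
            ultimately show "A \<omega> * Y \<omega>' + B \<omega> > i \<and> Y \<omega>' > K \<and> B \<omega> \<le> K"
              using y True elim by (auto simp: algebra_simps)
          qed
          then show ?case unfolding s_def G_def by simp
        qed
        show ?thesis
        proof (cases "A \<omega> = 1")
          case A1: True
          have "((\<lambda>i. G (i + - B \<omega>) / F i) \<longlongrightarrow> cY * exp (- b * - B \<omega>)) at_top"
            by (rule G_shift)
          moreover have "g \<omega> = cY * exp (- b * - B \<omega>)" unfolding g_def using A1 True elim by simp
          moreover have "eventually (\<lambda>i. G (i + - B \<omega>) / F i = s i \<omega>) at_top"
            using ev by eventually_elim (simp add: A1)
          ultimately show ?thesis by (auto intro: tendsto_cong[THEN iffD1, rotated])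
        next
          case A1: False
          then have u: "1 / A \<omega> > 1" using A0 by (simp add: less_divide_eq)
          have "((\<lambda>i. G (1 / A \<omega> * i + - B \<omega> / A \<omega>) / F i) \<longlongrightarrow> 0) at_top"
            by (rule G_grow[OF u])
          moreover have "g \<omega> = 0" unfolding g_def using A1 by simp
          moreover have "eventually (\<lambda>i. G (1 / A \<omega> * i + - B \<omega> / A \<omega>) / F i = s i \<omega>) at_top"
            using ev by eventually_elim (simp add: diff_divide_distrib)
          ultimately show ?thesis by (auto intro: tendsto_cong[THEN iffD1, rotated])
        qed
      qed
    qed
    show "\<forall>\<^sub>F i in at_top. AE \<omega> in M. norm (s i \<omega>) \<le> cY * exp (b * K) + 1"
    proof -
      have "eventually (\<lambda>x. G (x + - K) / F x < cY * exp (- b * - K) + 1) at_top"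
        using G_shift by (rule order_tendstoD) simp
      then show ?thesis using tF.F_ev_pos
      proof eventually_elim
        case (elim x)
        note ex = elim
        show ?case
          using AEA
        proof eventually_elim
          case (elim \<omega>)
          have "prob {\<omega>'\<in>space M. A \<omega> * Y \<omega>' + B \<omega> > x \<and> Y \<omega>' > K \<and> B \<omega> \<le> K} \<le> G (x + - K)"
            unfolding G_def
          proof (rule prob_mono_AE')
            show "AE \<omega>' in M. A \<omega> * Y \<omega>' + B \<omega> > x \<and> Y \<omega>' > K \<and> B \<omega> \<le> K \<longrightarrow> x + - K < Y \<omega>'"
            proof (rule AE_I2, intro impI)
              fix \<omega>' assume h: "A \<omega> * Y \<omega>' + B \<omega> > x \<and> Y \<omega>' > K \<and> B \<omega> \<le> K"
              have "A \<omega> * Y \<omega>' \<le> 1 * Y \<omega>'" using elim h K by (intro mult_right_mono) auto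
              then show "x + - K < Y \<omega>'" using h by simp
            qed
          qed measurable
          then have "s x \<omega> \<le> G (x + - K) / F x"
            unfolding s_def using ex by (intro divide_right_mono) auto
          moreover have "s x \<omega> \<ge> 0" unfolding s_def using F_nonneg by simp
          ultimately show "norm (s x \<omega>) \<le> cY * exp (b * K) + 1" using ex by simp
        qed
      qed
    qed
  qed
  moreover have "integral\<^sup>L M g = cY * expectation (\<lambda>\<omega>. exp (b * B \<omega>) * indicator {\<omega>. A \<omega> = 1} \<omega> * indicator {\<omega>\<in>space M. B \<omega> \<le> K} \<omega>)"
    unfolding g_def by simp
  ultimately show ?thesis unfolding eq by simp
qed


definition "JY K = expectation (\<lambda>\<omega>. exp (b * Y \<omega>) * indicator {\<omega>\<in>space M. Y \<omega> > K} \<omega>)"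
definition "JB K = expectation (\<lambda>\<omega>. exp (b * B \<omega>) * indicator {\<omega>\<in>space M. B \<omega> > K} \<omega>)"
definition "D3 = 4 * (cY + 1) * 2 powr (- c)"

lemma intJY: "integrable M (\<lambda>\<omega>. exp (b * Y \<omega>) * indicator {\<omega>\<in>space M. Y \<omega> > K} \<omega>)"
  using Bochner_Integration.integrable_mult_indicator[OF _ int_expY, of "{\<omega>\<in>space M. Y \<omega> > K}"]
  by (simp add: mult.commute)

lemma intJB: "integrable M (\<lambda>\<omega>. exp (b * B \<omega>) * indicator {\<omega>\<in>space M. B \<omega> > K} \<omega>)"
  using Bochner_Integration.integrable_mult_indicator[OF _ int_expB, of "{\<omega>\<in>space M. B \<omega> > K}"]
  by (simp add: mult.commute)

lemma JY_nonneg: "JY K \<ge> 0" unfolding JY_def by (intro integral_nonneg_AE) auto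
lemma JB_nonneg: "JB K \<ge> 0" unfolding JB_def by (intro integral_nonneg_AE) auto

lemma X3:
  assumes K: "K \<ge> 0"
  shows "eventually (\<lambda>x. prob {\<omega>\<in>space M. A \<omega> * Y \<omega> + B \<omega> > x \<and> Y \<omega> > K \<and> B \<omega> > K} / F x
            \<le> D3 * (JY K + JB K)) at_top"
proof -
  define Cg where "Cg = 2 * (cY + 1) * a"
  have Cg: "2 * a \<le> Cg" "Cg \<ge> 0" unfolding Cg_def using cY_pos a_pos by auto
  define q1 where "q1 x = prob {\<omega>\<in>space M. Y \<omega> + B \<omega> > x \<and> K < Y \<omega> \<and> Y \<omega> \<le> x / 2}" for x
  define q2 where "q2 x = prob {\<omega>\<in>space M. Y \<omega> > max (x - B \<omega>) (x / 2) \<and> B \<omega> > K}" for x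
  have p3: "prob {\<omega>\<in>space M. A \<omega> * Y \<omega> + B \<omega> > x \<and> Y \<omega> > K \<and> B \<omega> > K} \<le> q1 x + q2 x" for x
  proof -
    have "prob {\<omega>\<in>space M. A \<omega> * Y \<omega> + B \<omega> > x \<and> Y \<omega> > K \<and> B \<omega> > K}
        \<le> prob {\<omega>\<in>space M. (Y \<omega> + B \<omega> > x \<and> K < Y \<omega> \<and> Y \<omega> \<le> x / 2) \<or> (Y \<omega> > max (x - B \<omega>) (x / 2) \<and> B \<omega> > K)}"
    proof (rule prob_mono_AE')
      show "AE \<omega> in M. A \<omega> * Y \<omega> + B \<omega> > x \<and> Y \<omega> > K \<and> B \<omega> > K \<longrightarrow>
          (Y \<omega> + B \<omega> > x \<and> K < Y \<omega> \<and> Y \<omega> \<le> x / 2) \<or> (Y \<omega> > max (x - B \<omega>) (x / 2) \<and> B \<omega> > K)"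
        using AEA
      proof eventually_elim
        case (elim \<omega>)
        show ?case
        proof
          assume h: "A \<omega> * Y \<omega> + B \<omega> > x \<and> Y \<omega> > K \<and> B \<omega> > K"
          have "A \<omega> * Y \<omega> \<le> 1 * Y \<omega>" using elim h K by (intro mult_right_mono) auto
          then have "Y \<omega> + B \<omega> > x" using h by simp
          then show "(Y \<omega> + B \<omega> > x \<and> K < Y \<omega> \<and> Y \<omega> \<le> x / 2) \<or> (Y \<omega> > max (x - B \<omega>) (x / 2) \<and> B \<omega> > K)"
            using h by auto
        qed
      qed
    qed measurable
    also have "\<dots> = prob ({\<omega>\<in>space M. Y \<omega> + B \<omega> > x \<and> K < Y \<omega> \<and> Y \<omega> \<le> x / 2} \<union>
        {\<omega>\<in>space M. Y \<omega> > max (x - B \<omega>) (x / 2) \<and> B \<omega> > K})"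
      by (intro arg_cong[where f=prob]) auto
    also have "\<dots> \<le> q1 x + q2 x" unfolding q1_def q2_def
      by (rule measure_Un_le) measurable
    finally show ?thesis .
  qed
  have Pm1: "Measurable.pred ((borel \<Otimes>\<^sub>M borel) \<Otimes>\<^sub>M (borel \<Otimes>\<^sub>M borel))
      (\<lambda>p::(real \<times> real) \<times> (real \<times> real). fst (snd p) + snd (fst p) > x \<and> K < fst (snd p) \<and> fst (snd p) \<le> x / 2)" for x
    by measurable
  have Pm2: "Measurable.pred ((borel \<Otimes>\<^sub>M borel) \<Otimes>\<^sub>M (borel \<Otimes>\<^sub>M borel))
      (\<lambda>p::(real \<times> real) \<times> (real \<times> real). fst (snd p) > max (x - snd (fst p)) (x / 2) \<and> snd (fst p) > K)" for x
    by measurable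
  have q1e: "q1 x = expectation (\<lambda>\<omega>. prob {\<omega>'\<in>space M. Y \<omega> + B \<omega>' > x \<and> K < Y \<omega> \<and> Y \<omega> \<le> x / 2})" for x
    unfolding q1_def using fub(2)[of "\<lambda>a' b' y. y + b' > x \<and> K < y \<and> y \<le> x / 2", OF Pm1] by simp
  have q1m: "(\<lambda>\<omega>. prob {\<omega>'\<in>space M. Y \<omega> + B \<omega>' > x \<and> K < Y \<omega> \<and> Y \<omega> \<le> x / 2}) \<in> borel_measurable M" for x
    using fub(4)[of "\<lambda>a' b' y. y + b' > x \<and> K < y \<and> y \<le> x / 2", OF Pm1] by simp
  have q2e: "q2 x = expectation (\<lambda>\<omega>. prob {\<omega>'\<in>space M. Y \<omega>' > max (x - B \<omega>) (x / 2) \<and> B \<omega> > K})" for x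
    unfolding q2_def using fub(1)[of "\<lambda>a' b' y. y > max (x - b') (x / 2) \<and> b' > K", OF Pm2] by simp
  have q2m: "(\<lambda>\<omega>. prob {\<omega>'\<in>space M. Y \<omega>' > max (x - B \<omega>) (x / 2) \<and> B \<omega> > K}) \<in> borel_measurable M" for x
    using fub(3)[of "\<lambda>a' b' y. y > max (x - b') (x / 2) \<and> b' > K", OF Pm2] by simp
  have q1b: "q1 x \<le> 2 * a * ((x / 2) powr c * exp (- b * x)) * JY K" if x: "x \<ge> 2 * t0" for x
  proof -
    have x2: "x / 2 \<ge> t0" "x / 2 > 0" using x t0(1) by auto
    have "q1 x \<le> expectation (\<lambda>\<omega>. 2 * a * ((x / 2) powr c * exp (- b * x)) * (exp (b * Y \<omega>) * indicator {\<omega>\<in>space M. Y \<omega> > K} \<omega>))"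
      unfolding q1e
    proof (rule Bochner_Integration.integral_mono)
      show "integrable M (\<lambda>\<omega>. prob {\<omega>'\<in>space M. Y \<omega> + B \<omega>' > x \<and> K < Y \<omega> \<and> Y \<omega> \<le> x / 2})"
        by (rule integrable_const_bound[where B=1]) (auto intro: q1m)
      show "integrable M (\<lambda>\<omega>. 2 * a * ((x / 2) powr c * exp (- b * x)) * (exp (b * Y \<omega>) * indicator {\<omega>\<in>space M. Y \<omega> > K} \<omega>))"
        using intJY by simp
      fix \<omega> assume \<omega>: "\<omega> \<in> space M"
      show "prob {\<omega>'\<in>space M. Y \<omega> + B \<omega>' > x \<and> K < Y \<omega> \<and> Y \<omega> \<le> x / 2}
          \<le> 2 * a * ((x / 2) powr c * exp (- b * x)) * (exp (b * Y \<omega>) * indicator {\<omega>\<in>space M. Y \<omega> > K} \<omega>)"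
      proof (cases "K < Y \<omega> \<and> Y \<omega> \<le> x / 2")
        case True
        have "prob {\<omega>'\<in>space M. Y \<omega> + B \<omega>' > x \<and> K < Y \<omega> \<and> Y \<omega> \<le> x / 2} = F (x - Y \<omega>)"
          unfolding F_def using True by (intro arg_cong[where f=prob]) auto
        also have "\<dots> \<le> 2 * (a * (x - Y \<omega>) powr c * exp (- b * (x - Y \<omega>)))"
          using t0(2)[of "x - Y \<omega>"] True x2 by simp
        also have "\<dots> \<le> 2 * (a * (x / 2) powr c * exp (- b * (x - Y \<omega>)))"
          using True x2 c_lt a_pos by (intro mult_left_mono mult_right_mono powr_mono2') auto
        also have "\<dots> = 2 * a * ((x / 2) powr c * exp (- b * x)) * exp (b * Y \<omega>)"
          by (simp add: exp_add[symmetric] algebra_simps)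
        also have "\<dots> = 2 * a * ((x / 2) powr c * exp (- b * x)) * (exp (b * Y \<omega>) * indicator {\<omega>\<in>space M. Y \<omega> > K} \<omega>)"
          using True \<omega> by simp
        finally show ?thesis .
      next
        case False
        then have "{\<omega>'\<in>space M. Y \<omega> + B \<omega>' > x \<and> K < Y \<omega> \<and> Y \<omega> \<le> x / 2} = {}" by auto
        then have "prob {\<omega>'\<in>space M. Y \<omega> + B \<omega>' > x \<and> K < Y \<omega> \<and> Y \<omega> \<le> x / 2} = 0" by (simp only: measure_empty)
        moreover have "0 \<le> 2 * a * ((x / 2) powr c * exp (- b * x)) * (exp (b * Y \<omega>) * indicator {\<omega>\<in>space M. Y \<omega> > K} \<omega>)"
          using a_pos by simp
        ultimately show ?thesis by simp
      qed
    qed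
    also have "\<dots> = 2 * a * ((x / 2) powr c * exp (- b * x)) * JY K" unfolding JY_def by simp
    finally show ?thesis .
  qed
  have q2b: "q2 x \<le> Cg * ((x / 2) powr c * exp (- b * x)) * JB K" if x: "x \<ge> 2 * t0" for x
  proof -
    have x2: "x / 2 \<ge> t0" "x / 2 > 0" using x t0(1) by auto
    have "q2 x \<le> expectation (\<lambda>\<omega>. Cg * ((x / 2) powr c * exp (- b * x)) * (exp (b * B \<omega>) * indicator {\<omega>\<in>space M. B \<omega> > K} \<omega>))"
      unfolding q2e
    proof (rule Bochner_Integration.integral_mono)
      show "integrable M (\<lambda>\<omega>. prob {\<omega>'\<in>space M. Y \<omega>' > max (x - B \<omega>) (x / 2) \<and> B \<omega> > K})"
        by (rule integrable_const_bound[where B=1]) (auto intro: q2m)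
      show "integrable M (\<lambda>\<omega>. Cg * ((x / 2) powr c * exp (- b * x)) * (exp (b * B \<omega>) * indicator {\<omega>\<in>space M. B \<omega> > K} \<omega>))"
        using intJB by simp
      fix \<omega> assume \<omega>: "\<omega> \<in> space M"
      show "prob {\<omega>'\<in>space M. Y \<omega>' > max (x - B \<omega>) (x / 2) \<and> B \<omega> > K}
          \<le> Cg * ((x / 2) powr c * exp (- b * x)) * (exp (b * B \<omega>) * indicator {\<omega>\<in>space M. B \<omega> > K} \<omega>)"
      proof (cases "B \<omega> > K")
        case True
        define m where "m = max (x - B \<omega>) (x / 2)"
        have m: "m \<ge> x / 2" "m \<ge> x - B \<omega>" unfolding m_def by auto
        have "prob {\<omega>'\<in>space M. Y \<omega>' > max (x - B \<omega>) (x / 2) \<and> B \<omega> > K} = G m"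
          unfolding G_def m_def using True by (intro arg_cong[where f=prob]) auto
        also have "\<dots> \<le> 2 * (cY + 1) * (a * m powr c * exp (- b * m))"
          using t0(3)[of m] m x2 by simp
        also have "\<dots> \<le> 2 * (cY + 1) * (a * (x / 2) powr c * exp (- b * (x - B \<omega>)))"
          using m x2 c_lt a_pos cY_pos b_pos
          by (intro mult_left_mono mult_mono powr_mono2') auto
        also have "\<dots> = Cg * ((x / 2) powr c * exp (- b * x)) * exp (b * B \<omega>)"
        proof -
          have e: "exp (- b * (x - B \<omega>)) = exp (- b * x) * exp (b * B \<omega>)"
            by (simp add: exp_add[symmetric] algebra_simps)
          show ?thesis unfolding Cg_def e by (simp add: algebra_simps)
        qed
        also have "\<dots> = Cg * ((x / 2) powr c * exp (- b * x)) * (exp (b * B \<omega>) * indicator {\<omega>\<in>space M. B \<omega> > K} \<omega>)"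
          using True \<omega> by simp
        finally show ?thesis .
      next
        case False
        then have "prob {\<omega>'\<in>space M. Y \<omega>' > max (x - B \<omega>) (x / 2) \<and> B \<omega> > K} = 0" by simp
        moreover have "0 \<le> Cg * ((x / 2) powr c * exp (- b * x)) * (exp (b * B \<omega>) * indicator {\<omega>\<in>space M. B \<omega> > K} \<omega>)"
          using Cg by simp
        ultimately show ?thesis by simp
      qed
    qed
    also have "\<dots> = Cg * ((x / 2) powr c * exp (- b * x)) * JB K" unfolding JB_def by simp
    finally show ?thesis .
  qed
  show ?thesis
    using eventually_ge_at_top[of "2 * t0"] tF.F_lower[unfolded tF.h_def] tF.F_ev_pos
  proof eventually_elim
    case (elim x)
    have xp: "x > 0" using elim t0(1) by simp
    define E where "E = (x / 2) powr c * exp (- b * x)"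
    have E0: "E \<ge> 0" unfolding E_def by simp
    have Eb: "E \<le> 2 powr (- c) * 2 * F x / a"
    proof -
      have p1: "(x / 2) powr c = x powr c / 2 powr c" using xp by (simp add: powr_divide)
      have p2: "2 powr (- c) = inverse (2 powr c)" by (rule powr_minus)
      have "E = 2 powr (- c) * (x powr c * exp (- b * x))"
        unfolding E_def p1 p2 by (simp add: divide_inverse)
      moreover have "x powr c * exp (- b * x) \<le> 2 * F x / a"
      proof -
        have "a * (x powr c * exp (- b * x)) \<le> 2 * F x" using elim(2) by (simp add: mult.assoc)
        then show ?thesis using a_pos by (simp add: pos_le_divide_eq mult.commute)
      qed
      ultimately have "E \<le> 2 powr (- c) * (2 * F x / a)"
        using mult_left_mono[of "x powr c * exp (- b * x)" "2 * F x / a" "2 powr (- c)"] by simp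
      then show ?thesis by simp
    qed
    have "prob {\<omega>\<in>space M. A \<omega> * Y \<omega> + B \<omega> > x \<and> Y \<omega> > K \<and> B \<omega> > K} \<le> q1 x + q2 x" by (rule p3)
    also have "\<dots> \<le> 2 * a * E * JY K + Cg * E * JB K"
      using q1b[OF elim(1)] q2b[OF elim(1)] unfolding E_def by simp
    also have "\<dots> \<le> Cg * E * JY K + Cg * E * JB K"
      using Cg E0 JY_nonneg[of K] by (intro add_right_mono mult_right_mono) auto
    also have "\<dots> = Cg * (JY K + JB K) * E" by (simp add: algebra_simps)
    also have "\<dots> \<le> Cg * (JY K + JB K) * (2 powr (- c) * 2 * F x / a)"
      using Cg JY_nonneg[of K] JB_nonneg[of K] Eb by (intro mult_left_mono) auto
    also have "\<dots> = D3 * (JY K + JB K) * F x"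
      unfolding Cg_def D3_def using a_pos by (simp add: field_simps)
    finally show ?case using elim(3) by (simp add: divide_le_eq)
  qed
qed


lemma KL1: "((\<lambda>K. expectation (\<lambda>\<omega>. f (Y \<omega>) * indicator {\<omega>\<in>space M. Y \<omega> \<le> K} \<omega>)) \<longlongrightarrow> expectation (\<lambda>\<omega>. f (Y \<omega>))) at_top"
proof (rule integral_dominated_convergence_at_top[where w="\<lambda>\<omega>. f (Y \<omega>)"])
  show "(\<lambda>\<omega>. f (Y \<omega>)) \<in> borel_measurable M" by measurable
  show "(\<lambda>\<omega>. f (Y \<omega>) * indicator {\<omega>\<in>space M. Y \<omega> \<le> K} \<omega>) \<in> borel_measurable M" for K by measurable
  show "integrable M (\<lambda>\<omega>. f (Y \<omega>))" by (rule int_fY)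
  show "AE \<omega> in M. ((\<lambda>K. f (Y \<omega>) * indicator {\<omega>\<in>space M. Y \<omega> \<le> K} \<omega>) \<longlongrightarrow> f (Y \<omega>)) at_top"
  proof (rule AE_I2)
    fix \<omega> assume \<omega>: "\<omega> \<in> space M"
    have "eventually (\<lambda>K. f (Y \<omega>) = f (Y \<omega>) * indicator {\<omega>\<in>space M. Y \<omega> \<le> K} \<omega>) at_top"
      using eventually_ge_at_top[of "Y \<omega>"] by eventually_elim (use \<omega> in simp)
    then show "((\<lambda>K. f (Y \<omega>) * indicator {\<omega>\<in>space M. Y \<omega> \<le> K} \<omega>) \<longlongrightarrow> f (Y \<omega>)) at_top"
      by (rule tendsto_eventually[THEN tendsto_cong[THEN iffD1, rotated], rotated]) auto
  qed
  show "\<forall>\<^sub>F K in at_top. AE \<omega> in M. norm (f (Y \<omega>) * indicator {\<omega>\<in>space M. Y \<omega> \<le> K} \<omega>) \<le> f (Y \<omega>)"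
    by (intro always_eventually allI AE_I2) (auto simp: f_nonneg indicator_def)
qed

lemma KL2: "((\<lambda>K. expectation (\<lambda>\<omega>. exp (b * B \<omega>) * indicator {\<omega>. A \<omega> = 1} \<omega> * indicator {\<omega>\<in>space M. B \<omega> \<le> K} \<omega>))
    \<longlongrightarrow> expectation (\<lambda>\<omega>. exp (b * B \<omega>) * indicator {\<omega>. A \<omega> = 1} \<omega>)) at_top"
proof (rule integral_dominated_convergence_at_top[where w="\<lambda>\<omega>. exp (b * B \<omega>)"])
  show "(\<lambda>\<omega>. exp (b * B \<omega>) * indicator {\<omega>. A \<omega> = 1} \<omega>) \<in> borel_measurable M" by measurable
  show "(\<lambda>\<omega>. exp (b * B \<omega>) * indicator {\<omega>. A \<omega> = 1} \<omega> * indicator {\<omega>\<in>space M. B \<omega> \<le> K} \<omega>) \<in> borel_measurable M" for K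
    by measurable
  show "integrable M (\<lambda>\<omega>. exp (b * B \<omega>))" by (rule int_expB)
  show "AE \<omega> in M. ((\<lambda>K. exp (b * B \<omega>) * indicator {\<omega>. A \<omega> = 1} \<omega> * indicator {\<omega>\<in>space M. B \<omega> \<le> K} \<omega>)
      \<longlongrightarrow> exp (b * B \<omega>) * indicator {\<omega>. A \<omega> = 1} \<omega>) at_top"
  proof (rule AE_I2)
    fix \<omega> assume \<omega>: "\<omega> \<in> space M"
    have "eventually (\<lambda>K. exp (b * B \<omega>) * indicator {\<omega>. A \<omega> = 1} \<omega> = exp (b * B \<omega>) * indicator {\<omega>. A \<omega> = 1} \<omega> * indicator {\<omega>\<in>space M. B \<omega> \<le> K} \<omega>) at_top"
      using eventually_ge_at_top[of "B \<omega>"] by eventually_elim (use \<omega> in simp)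
    then show "((\<lambda>K. exp (b * B \<omega>) * indicator {\<omega>. A \<omega> = 1} \<omega> * indicator {\<omega>\<in>space M. B \<omega> \<le> K} \<omega>)
      \<longlongrightarrow> exp (b * B \<omega>) * indicator {\<omega>. A \<omega> = 1} \<omega>) at_top"
      by (rule tendsto_eventually[THEN tendsto_cong[THEN iffD1, rotated], rotated]) auto
  qed
  show "\<forall>\<^sub>F K in at_top. AE \<omega> in M. norm (exp (b * B \<omega>) * indicator {\<omega>. A \<omega> = 1} \<omega> * indicator {\<omega>\<in>space M. B \<omega> \<le> K} \<omega>) \<le> exp (b * B \<omega>)"
    by (intro always_eventually allI AE_I2) (auto simp: indicator_def)
qed

lemma KL3: "(JY \<longlongrightarrow> 0) at_top"
  unfolding JY_def
proof (rule integral_dominated_convergence_at_top[where w="\<lambda>\<omega>. exp (b * Y \<omega>)" and f="\<lambda>_. 0", simplified])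
  show "(\<lambda>\<omega>. exp (b * Y \<omega>) * indicator {\<omega>\<in>space M. Y \<omega> > K} \<omega>) \<in> borel_measurable M" for K
    by measurable
  show "integrable M (\<lambda>\<omega>. exp (b * Y \<omega>))" by (rule int_expY)
  show "AE \<omega> in M. ((\<lambda>K. exp (b * Y \<omega>) * indicator {\<omega>\<in>space M. Y \<omega> > K} \<omega>) \<longlongrightarrow> 0) at_top"
  proof (rule AE_I2)
    fix \<omega> assume \<omega>: "\<omega> \<in> space M"
    have "eventually (\<lambda>K. 0 = exp (b * Y \<omega>) * indicator {\<omega>\<in>space M. Y \<omega> > K} \<omega>) at_top"
      using eventually_ge_at_top[of "Y \<omega>"] by eventually_elim (use \<omega> in simp)
    then show "((\<lambda>K. exp (b * Y \<omega>) * indicator {\<omega>\<in>space M. Y \<omega> > K} \<omega>) \<longlongrightarrow> 0) at_top"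
      by (rule tendsto_eventually[THEN tendsto_cong[THEN iffD1, rotated], rotated]) auto
  qed
  show "\<forall>\<^sub>F K in at_top. AE \<omega> in M. norm (exp (b * Y \<omega>) * indicator {\<omega>\<in>space M. Y \<omega> > K} \<omega>) \<le> exp (b * Y \<omega>)"
    by (intro always_eventually allI AE_I2) (auto simp: indicator_def)
qed

lemma KL4: "(JB \<longlongrightarrow> 0) at_top"
  unfolding JB_def
proof (rule integral_dominated_convergence_at_top[where w="\<lambda>\<omega>. exp (b * B \<omega>)" and f="\<lambda>_. 0", simplified])
  show "(\<lambda>\<omega>. exp (b * B \<omega>) * indicator {\<omega>\<in>space M. B \<omega> > K} \<omega>) \<in> borel_measurable M" for K
    by measurable
  show "integrable M (\<lambda>\<omega>. exp (b * B \<omega>))" by (rule int_expB)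
  show "AE \<omega> in M. ((\<lambda>K. exp (b * B \<omega>) * indicator {\<omega>\<in>space M. B \<omega> > K} \<omega>) \<longlongrightarrow> 0) at_top"
  proof (rule AE_I2)
    fix \<omega> assume \<omega>: "\<omega> \<in> space M"
    have "eventually (\<lambda>K. 0 = exp (b * B \<omega>) * indicator {\<omega>\<in>space M. B \<omega> > K} \<omega>) at_top"
      using eventually_ge_at_top[of "B \<omega>"] by eventually_elim (use \<omega> in simp)
    then show "((\<lambda>K. exp (b * B \<omega>) * indicator {\<omega>\<in>space M. B \<omega> > K} \<omega>) \<longlongrightarrow> 0) at_top"
      by (rule tendsto_eventually[THEN tendsto_cong[THEN iffD1, rotated], rotated]) auto
  qed
  show "\<forall>\<^sub>F K in at_top. AE \<omega> in M. norm (exp (b * B \<omega>) * indicator {\<omega>\<in>space M. B \<omega> > K} \<omega>) \<le> exp (b * B \<omega>)"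
    by (intro always_eventually allI AE_I2) (auto simp: indicator_def)
qed


lemma main_lim:
  "((\<lambda>x. prob {\<omega>\<in>space M. A \<omega> * Y \<omega> + B \<omega> > x} / F x)
     \<longlongrightarrow> cY * expectation (\<lambda>\<omega>. exp (b * B \<omega>) * indicator {\<omega>. A \<omega> = 1} \<omega>) + expectation (\<lambda>\<omega>. f (Y \<omega>))) at_top"
proof (rule tendstoI)
  fix e :: real assume e: "e > 0"
  define T where "T = cY * expectation (\<lambda>\<omega>. exp (b * B \<omega>) * indicator {\<omega>. A \<omega> = 1} \<omega>) + expectation (\<lambda>\<omega>. f (Y \<omega>))"
  define I1 where "I1 K = expectation (\<lambda>\<omega>. f (Y \<omega>) * indicator {\<omega>\<in>space M. Y \<omega> \<le> K} \<omega>)" for K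
  define I2 where "I2 K = expectation (\<lambda>\<omega>. exp (b * B \<omega>) * indicator {\<omega>. A \<omega> = 1} \<omega> * indicator {\<omega>\<in>space M. B \<omega> \<le> K} \<omega>)" for K
  have L: "((\<lambda>K. I1 K + cY * I2 K) \<longlongrightarrow> T) at_top"
  proof -
    have "((\<lambda>K. I1 K + cY * I2 K) \<longlongrightarrow> expectation (\<lambda>\<omega>. f (Y \<omega>)) + cY * expectation (\<lambda>\<omega>. exp (b * B \<omega>) * indicator {\<omega>. A \<omega> = 1} \<omega>)) at_top"
      unfolding I1_def I2_def by (intro tendsto_add tendsto_mult tendsto_const KL1 KL2)
    then show ?thesis unfolding T_def by (simp add: add.commute)
  qed
  have e3: "e / 4 > 0" using e by simp
  have L3: "((\<lambda>K. D3 * (JY K + JB K)) \<longlongrightarrow> 0) at_top"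
    using tendsto_mult[OF tendsto_const[of D3] tendsto_add[OF KL3 KL4]] by simp
  have "eventually (\<lambda>K. dist (I1 K + cY * I2 K) T < e / 4 \<and> D3 * (JY K + JB K) < e / 4 \<and> K \<ge> 0) at_top"
    using tendstoD[OF L e3] order_tendstoD(2)[OF L3 e3] eventually_ge_at_top[of 0]
    by eventually_elim auto
  then obtain K where K: "dist (I1 K + cY * I2 K) T < e / 4" "D3 * (JY K + JB K) < e / 4" "K \<ge> 0"
    by (auto simp: eventually_at_top_linorder)
  define p1 where "p1 x = prob {\<omega>\<in>space M. A \<omega> * Y \<omega> + B \<omega> > x \<and> Y \<omega> \<le> K}" for x
  define p2 where "p2 x = prob {\<omega>\<in>space M. A \<omega> * Y \<omega> + B \<omega> > x \<and> Y \<omega> > K \<and> B \<omega> \<le> K}" for x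
  define p3 where "p3 x = prob {\<omega>\<in>space M. A \<omega> * Y \<omega> + B \<omega> > x \<and> Y \<omega> > K \<and> B \<omega> > K}" for x
  have split: "prob {\<omega>\<in>space M. A \<omega> * Y \<omega> + B \<omega> > x} = p1 x + p2 x + p3 x" for x
  proof -
    define S1 where "S1 = {\<omega>\<in>space M. A \<omega> * Y \<omega> + B \<omega> > x \<and> Y \<omega> \<le> K}"
    define S2 where "S2 = {\<omega>\<in>space M. A \<omega> * Y \<omega> + B \<omega> > x \<and> Y \<omega> > K \<and> B \<omega> \<le> K}"
    define S3 where "S3 = {\<omega>\<in>space M. A \<omega> * Y \<omega> + B \<omega> > x \<and> Y \<omega> > K \<and> B \<omega> > K}"
    have m: "S1 \<in> events" "S2 \<in> events" "S3 \<in> events" unfolding S1_def S2_def S3_def by measurable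
    have u: "{\<omega>\<in>space M. A \<omega> * Y \<omega> + B \<omega> > x} = S1 \<union> (S2 \<union> S3)"
      unfolding S1_def S2_def S3_def by auto
    have "prob (S2 \<union> S3) = prob S2 + prob S3"
      by (rule finite_measure_Union) (use m in \<open>auto simp: S2_def S3_def\<close>)
    moreover have "prob (S1 \<union> (S2 \<union> S3)) = prob S1 + prob (S2 \<union> S3)"
      by (rule finite_measure_Union) (use m in \<open>auto simp: S1_def S2_def S3_def\<close>)
    ultimately show ?thesis unfolding u p1_def p2_def p3_def S1_def[symmetric] S2_def[symmetric] S3_def[symmetric]
      by simp
  qed
  have ev1: "eventually (\<lambda>x. dist (p1 x / F x) (I1 K) < e / 4) at_top"
    using tendstoD[OF X1[OF K(3)] e3] unfolding p1_def I1_def by simp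
  have ev2: "eventually (\<lambda>x. dist (p2 x / F x) (cY * I2 K) < e / 4) at_top"
    using tendstoD[OF X2[OF K(3)] e3] unfolding p2_def I2_def by simp
  have ev3: "eventually (\<lambda>x. p3 x / F x \<le> D3 * (JY K + JB K)) at_top"
    using X3[OF K(3)] unfolding p3_def .
  show "eventually (\<lambda>x. dist (prob {\<omega>\<in>space M. A \<omega> * Y \<omega> + B \<omega> > x} / F x) T < e) at_top"
    using ev1 ev2 ev3 tF.F_ev_pos
  proof eventually_elim
    case (elim x)
    have p3n: "p3 x / F x \<ge> 0" unfolding p3_def using elim(4) by simp
    have r: "prob {\<omega>\<in>space M. A \<omega> * Y \<omega> + B \<omega> > x} / F x = p1 x / F x + p2 x / F x + p3 x / F x"
      unfolding split by (simp add: add_divide_distrib)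
    have "dist (prob {\<omega>\<in>space M. A \<omega> * Y \<omega> + B \<omega> > x} / F x) T
        \<le> dist (p1 x / F x) (I1 K) + dist (p2 x / F x) (cY * I2 K) + p3 x / F x + dist (I1 K + cY * I2 K) T"
      unfolding r dist_real_def using p3n by linarith
    also have "\<dots> < e" using elim K by linarith
    finally show ?case .
  qed
qed

end

theorem lemma6p1:
  fixes M :: "'s measure"
    and A B Y :: "'s \<Rightarrow> real"
    and f :: "real \<Rightarrow> real"
    and a b c cY :: real
  assumes "prob_space M"
    and A_meas: "A \<in> borel_measurable M"
    and B_meas: "B \<in> borel_measurable M"
    and Y_meas: "Y \<in> borel_measurable M"
    and A_range: "measure M {\<omega> \<in> space M. 0 < A \<omega> \<and> A \<omega> \<le> 1} = 1"
    and "a > 0" and "b > 0" and "c < -1"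
    and B_tail: "(\<lambda>x. measure M {\<omega> \<in> space M. B \<omega> > x}) \<sim>[at_top] (\<lambda>x. a * x powr c * exp (- b * x))"
    and cramer: "integral\<^sup>L M (\<lambda>\<omega>. exp (b * B \<omega>) * indicator {\<omega>. A \<omega> = 1} \<omega>) < 1"
    and f_meas: "f \<in> borel_measurable borel"
    and f_nonneg: "\<And>y. f y \<ge> 0"
    and f_lim: "\<And>y. ((\<lambda>x. measure M {\<omega> \<in> space M. A \<omega> * y + B \<omega> > x}
                          / measure M {\<omega> \<in> space M. B \<omega> > x}) \<longlongrightarrow> f y) at_top"
    and indep: "prob_space.indep_set M
        {(\<lambda>\<omega>. (A \<omega>, B \<omega>)) -` S \<inter> space M | S. S \<in> sets (borel \<Otimes>\<^sub>M borel)}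
        {Y -` S \<inter> space M | S. S \<in> sets borel}"
    and "cY > 0"
    and Y_tail: "((\<lambda>x. measure M {\<omega> \<in> space M. Y \<omega> > x}
                     / measure M {\<omega> \<in> space M. B \<omega> > x}) \<longlongrightarrow> cY) at_top"
  shows "integrable M (\<lambda>\<omega>. f (Y \<omega>)) \<and>
         ((\<lambda>x. measure M {\<omega> \<in> space M. A \<omega> * Y \<omega> + B \<omega> > x}
               / measure M {\<omega> \<in> space M. B \<omega> > x})
          \<longlongrightarrow> cY * integral\<^sup>L M (\<lambda>\<omega>. exp (b * B \<omega>) * indicator {\<omega>. A \<omega> = 1} \<omega>)
              + integral\<^sup>L M (\<lambda>\<omega>. f (Y \<omega>))) at_top"
proof -
  interpret L: lem6 M A B Y f a b c cY
    by (intro lem6.intro lem6_axioms.intro) (use assms in auto)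
  show ?thesis using L.int_fY L.main_lim unfolding L.F_def by simp
qed

end
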